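(* Let $p$ be an odd prime, let $G$ be a proper subgroup of the multiplicative group $\mathbb{F}_p^*=\mathbb{F}_p\setminus\{0\}$, and let $\lambda\in G$. Then there do not exist sets $A,B\subseteq \mathbb{F}_p^*$ with $|A|\ge 2$ and $|B|\ge 2$ such that \[ AB=(G-\lambda)\setminus\{0\}. \]
   Context: $\mathbb{F}_p$ denotes the field with $p$ elements. For $A,B\subseteq\mathbb{F}_p$, the product set is $AB=\{ab: a\in A,\ b\in B\}$, and $G-\lambda=\{g-\lambda: g\in G\}$. *)

theory Defs
  imports "Berlekamp_Zassenhaus.Finite_Field"
begin

definition prodset :: "'a::times set \<Rightarrow> 'a set \<Rightarrow> 'a set" where
  "prodset A B = {a * b | a b. a \<in> A \<and> b \<in> B}"

definition mult_subgroup :: "'a::field set \<Rightarrow> bool" where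
  "mult_subgroup G \<longleftrightarrow> G \<subseteq> UNIV - {0} \<and> 1 \<in> G \<and>
     (\<forall>x\<in>G. \<forall>y\<in>G. x * y \<in> G) \<and> (\<forall>x\<in>G. inverse x \<in> G)"

end

theory Submission
  imports Defs
begin

definition lagc :: "'a::field set \<Rightarrow> 'a \<Rightarrow> 'a" where
  "lagc B b = (\<Prod>b'\<in>B-{b}. (0 - b') / (b - b'))"

lemma lagrange_eval0:
  fixes L :: "'a::field poly"
  assumes fin: "finite B" and dL: "degree L < card B"
  shows "(\<Sum>b\<in>B. lagc B b * poly L b) = poly L 0"
proof -
  define I where "I = (\<Sum>b\<in>B. smult (poly L b) (\<Prod>b'\<in>B-{b}. [:-b'/(b-b'), 1/(b-b'):]))"
  have pI: "poly I x = (\<Sum>b\<in>B. poly L b * (\<Prod>b'\<in>B-{b}. (x - b')/(b-b')))" for x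
    by (simp add: I_def poly_sum poly_prod diff_divide_distrib algebra_simps)
  have "B \<noteq> {}" using dL by auto
  have dI: "degree I < card B"
  proof -
    have "degree I \<le> card B - 1"
      unfolding I_def
    proof (rule degree_sum_le[OF fin])
      fix b assume "b \<in> B"
      have "degree (smult (poly L b) (\<Prod>b'\<in>B-{b}. [:-b'/(b-b'), 1/(b-b'):]))
          \<le> degree (\<Prod>b'\<in>B-{b}. [:-b'/(b-b'), 1/(b-b'):])" by (rule degree_smult_le)
      also have "\<dots> \<le> sum (degree \<circ> (\<lambda>b'. [:-b'/(b-b'), 1/(b-b'):])) (B-{b})"
        by (rule degree_prod_sum_le) (use fin in auto)
      also have "\<dots> \<le> sum (\<lambda>_. 1) (B-{b})"
        by (intro sum_mono) auto
      also have "\<dots> = card B - 1" using fin \<open>b \<in> B\<close> by simp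
      finally show "degree (smult (poly L b) (\<Prod>b'\<in>B-{b}. [:-b'/(b-b'), 1/(b-b'):])) \<le> card B - 1" .
    qed
    moreover have "card B > 0" using \<open>B \<noteq> {}\<close> fin card_gt_0_iff by blast
    ultimately show ?thesis by linarith
  qed
  have agree: "poly L b0 = poly I b0" if "b0 \<in> B" for b0
  proof -
    have "poly I b0 = poly L b0 * (\<Prod>b'\<in>B-{b0}. (b0 - b')/(b0-b')) +
       (\<Sum>b\<in>B-{b0}. poly L b * (\<Prod>b'\<in>B-{b}. (b0 - b')/(b-b')))"
      unfolding pI using fin that by (simp add: sum.remove)
    also have "(\<Prod>b'\<in>B-{b0}. (b0 - b')/(b0-b')) = 1"
      by (rule prod.neutral) auto
    also have "(\<Sum>b\<in>B-{b0}. poly L b * (\<Prod>b'\<in>B-{b}. (b0 - b')/(b-b'))) = 0"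
    proof (rule sum.neutral, intro ballI)
      fix b assume "b \<in> B - {b0}"
      then have "(\<Prod>b'\<in>B-{b}. (b0 - b')/(b-b')) = 0"
        using fin that by (intro prod_zero) auto
      then show "poly L b * (\<Prod>b'\<in>B-{b}. (b0 - b')/(b-b')) = 0" by simp
    qed
    finally show ?thesis by simp
  qed
  have "L = I"
    by (rule poly_eqI_degree[of B]) (use agree dL dI in auto)
  then have "poly L 0 = poly I 0" by simp
  also have "\<dots> = (\<Sum>b\<in>B. lagc B b * poly L b)"
    unfolding pI lagc_def by (simp add: mult.commute)
  finally show ?thesis by simp
qed

lemma coeff_mult_1: "coeff (p * q) 1 = coeff p 0 * coeff q 1 + coeff p 1 * coeff (q::'a::comm_semiring_1 poly) 0"
  by (simp add: coeff_mult atMost_Suc add.commute)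

lemma linprod_deg_lead:
  assumes "finite B"
  shows "degree (\<Prod>b\<in>B. [:-b, 1::'a::field:]) = card B \<and> coeff (\<Prod>b\<in>B. [:-b, 1::'a:]) (card B) = 1"
proof -
  have d: "degree (\<Prod>b\<in>B. [:-b, 1::'a:]) = card B"
    by (subst degree_prod_eq_sum_degree) auto
  have "lead_coeff (\<Prod>b\<in>B. [:-b, 1::'a:]) = 1"
    by (simp add: lead_coeff_prod)
  with d show ?thesis by simp
qed

lemma linprod_top:
  assumes "finite B" "B \<noteq> {}"
  shows "coeff (\<Prod>b\<in>B. [:-b, 1::'a::field:]) (card B - 1) = - (\<Sum>b\<in>B. b)"
  using assms
proof (induction B rule: finite_ne_induct)
  case (singleton x)
  then show ?case by simp
next
  case (insert x F)
  have c: "coeff (\<Prod>b\<in>F. [:-b, 1::'a:]) (card F) = 1" using linprod_deg_lead[OF insert(1)] by simp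
  have "card F \<ge> 1" using insert(1,2) by (simp add: Suc_leI card_gt_0_iff)
  have "(\<Prod>b\<in>insert x F. [:-b, 1::'a:]) = [:-x, 1:] * (\<Prod>b\<in>F. [:-b, 1::'a:])"
    using insert by simp
  also have "\<dots> = smult (-x) (\<Prod>b\<in>F. [:-b, 1::'a:]) + pCons 0 (\<Prod>b\<in>F. [:-b, 1::'a:])"
    by (simp add: mult_pCons_left)
  finally have e: "(\<Prod>b\<in>insert x F. [:-b, 1::'a:]) = smult (-x) (\<Prod>b\<in>F. [:-b, 1::'a:]) + pCons 0 (\<Prod>b\<in>F. [:-b, 1::'a:])" .
  have "card (insert x F) - 1 = Suc (card F - 1)" using insert \<open>card F \<ge> 1\<close> by simp
  obtain k where k: "card F = Suc k" using \<open>card F \<ge> 1\<close> by (cases "card F") auto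
  then show ?case using insert c \<open>card F \<ge> 1\<close> unfolding e
    by (simp add: coeff_pCons)
qed

lemma linprod_low:
  assumes "finite X" "0 \<notin> X"
  shows "coeff (\<Prod>a\<in>X. [:-a, 1::'a::field:]) 1 = - coeff (\<Prod>a\<in>X. [:-a, 1::'a:]) 0 * (\<Sum>a\<in>X. inverse a)"
  using assms
proof (induction X rule: finite_induct)
  case empty
  then show ?case by simp
next
  case (insert x F)
  let ?R = "\<Prod>a\<in>F. [:-a, 1::'a:]"
  have e: "(\<Prod>a\<in>insert x F. [:-a, 1::'a:]) = [:-x, 1:] * ?R" using insert by simp
  have "x \<noteq> 0" using insert by auto
  show ?case unfolding e coeff_mult_1 coeff_mult_0 using insert \<open>x \<noteq> 0\<close>
    by (simp add: field_simps)
qed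

lemma coeff_power_1:
  "coeff ((R::'a::comm_semiring_1 poly) ^ Suc m) 1 = of_nat (Suc m) * coeff R 0 ^ m * coeff R 1"
proof (induction m)
  case 0
  then show ?case by simp
next
  case (Suc m)
  have "coeff (R ^ Suc (Suc m)) 1 = coeff (R * R ^ Suc m) 1" by simp
  also have "\<dots> = coeff R 0 * coeff (R ^ Suc m) 1 + coeff R 1 * coeff (R ^ Suc m) 0"
    by (rule coeff_mult_1)
  also have "\<dots> = of_nat (Suc (Suc m)) * coeff R 0 ^ Suc m * coeff R 1"
    unfolding Suc coeff_0_power by (simp add: algebra_simps)
  finally show ?case .
qed

lemma sigma_low:
  fixes Y :: "'a::field set"
  assumes fin: "finite Y" and k: "k < card Y"
  shows "(\<Sum>y\<in>Y. lagc Y y * (y ^ k * (a * y + 1) ^ (card Y - 1 - k))) = (if k = 0 then 1 else 0)"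
proof -
  define L where "L = monom (1::'a) k * [:1, a:] ^ (card Y - 1 - k)"
  have "degree L \<le> k + (card Y - 1 - k)"
    unfolding L_def
    by (rule order.trans[OF degree_mult_le], rule add_mono, simp add: degree_monom_le,
        rule order.trans[OF degree_power_le], simp)
  then have dL: "degree L < card Y" using k by linarith
  have pL: "poly L x = x ^ k * (a * x + 1) ^ (card Y - 1 - k)" for x
    by (simp add: L_def poly_monom algebra_simps)
  have "(\<Sum>y\<in>Y. lagc Y y * poly L y) = poly L 0" by (rule lagrange_eval0[OF fin dL])
  then show ?thesis unfolding pL by simp
qed

lemma sigma_m:
  fixes Y :: "'a::field set"
  assumes fin: "finite Y" and ne: "Y \<noteq> {}"
  shows "(\<Sum>y\<in>Y. lagc Y y * y ^ card Y) = - poly (\<Prod>b\<in>Y. [:-b, 1::'a:]) 0"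
proof -
  let ?w = "\<Prod>b\<in>Y. [:-b, 1::'a:]"
  let ?m = "card Y"
  have m0: "?m > 0" using fin ne card_gt_0_iff by blast
  from linprod_deg_lead[OF fin] have dw: "degree ?w = ?m" and lw: "coeff ?w ?m = 1" by auto
  define L where "L = monom (1::'a) ?m - ?w"
  have dL: "degree L < ?m"
  proof (rule degree_lessI)
    show "L \<noteq> 0 \<or> 0 < ?m" using m0 by simp
    show "\<forall>k\<ge>?m. coeff L k = 0"
    proof (intro allI impI)
      fix k assume "k \<ge> ?m"
      show "coeff L k = 0"
      proof (cases "k = ?m")
        case True then show ?thesis using lw by (simp add: L_def)
      next
        case False
        then have "k > degree ?w" using dw \<open>k \<ge> ?m\<close> by simp
        then show ?thesis using False by (simp add: L_def coeff_eq_0 coeff_monom)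
      qed
    qed
  qed
  have "(\<Sum>y\<in>Y. lagc Y y * poly L y) = poly L 0" by (rule lagrange_eval0[OF fin dL])
  moreover have "poly L y = y ^ ?m" if "y \<in> Y" for y
    using that fin by (simp add: L_def poly_monom poly_prod prod_zero_iff)
  ultimately show ?thesis using m0 by (simp add: L_def poly_monom)
qed

lemma sigma_m1:
  fixes Y :: "'a::field set"
  assumes fin: "finite Y" and ne: "Y \<noteq> {}"
  shows "(\<Sum>y\<in>Y. lagc Y y * y ^ Suc (card Y)) = (\<Sum>y\<in>Y. y) * (\<Sum>y\<in>Y. lagc Y y * y ^ card Y)"
proof -
  let ?w = "\<Prod>b\<in>Y. [:-b, 1::'a:]"
  let ?m = "card Y"
  let ?e = "\<Sum>y\<in>Y. y"
  have m0: "?m > 0" using fin ne card_gt_0_iff by blast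
  from linprod_deg_lead[OF fin] have dw: "degree ?w = ?m" and lw: "coeff ?w ?m = 1" by auto
  have tw: "coeff ?w (?m - 1) = - ?e" by (rule linprod_top[OF fin ne])
  define L where "L = monom (1::'a) (Suc ?m) - [:?e, 1:] * ?w"
  have cwm: "coeff ([:?e, 1:] * ?w) k = ?e * coeff ?w k + (case k of 0 \<Rightarrow> 0 | Suc j \<Rightarrow> coeff ?w j)" for k
    by (simp add: coeff_pCons split: nat.split)
  have dL: "degree L < ?m"
  proof (rule degree_lessI)
    show "L \<noteq> 0 \<or> 0 < ?m" using m0 by simp
    show "\<forall>k\<ge>?m. coeff L k = 0"
    proof (intro allI impI)
      fix k assume "k \<ge> ?m"
      consider "k = ?m" | "k = Suc ?m" | "k > Suc ?m" using \<open>k \<ge> ?m\<close> by linarith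
      then show "coeff L k = 0"
      proof cases
        case 1
        obtain j where j: "?m = Suc j" using m0 by (cases ?m) auto
        have "coeff L k = - (?e * 1 + coeff ?w j)" using 1 lw j
          by (simp add: L_def cwm coeff_monom)
        also have "coeff ?w j = - ?e" using tw j by simp
        finally show ?thesis by simp
      next
        case 2
        have "coeff ?w (Suc ?m) = 0" using dw by (simp add: coeff_eq_0)
        then show ?thesis using 2 lw by (simp add: L_def cwm coeff_monom)
      next
        case 3
        then obtain j where j: "k = Suc j" "j > ?m" by (cases k) auto
        have "coeff ?w k = 0" "coeff ?w j = 0" using dw j by (simp_all add: coeff_eq_0)
        then show ?thesis using 3 j by (simp add: L_def cwm coeff_monom)
      qed
    qed
  qed
  have "(\<Sum>y\<in>Y. lagc Y y * poly L y) = poly L 0" by (rule lagrange_eval0[OF fin dL])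
  moreover have "poly L y = y ^ Suc ?m" if "y \<in> Y" for y
  proof -
    have "(\<Prod>b\<in>Y. y - b) = 0" using that fin by (intro prod_zero) auto
    then show ?thesis by (simp add: L_def poly_monom poly_prod)
  qed
  moreover have "poly L 0 = - ?e * poly ?w 0" by (simp add: L_def poly_monom)
  ultimately have "(\<Sum>y\<in>Y. lagc Y y * y ^ Suc ?m) = - ?e * poly ?w 0" by simp
  also have "\<dots> = ?e * (\<Sum>y\<in>Y. lagc Y y * y ^ ?m)" using sigma_m[OF fin ne] by simp
  finally show ?thesis .
qed

lemma smult_sum_right': "smult c (\<Sum>i\<in>S. f i) = (\<Sum>i\<in>S. smult c (f i))"
  by (induct S rule: infinite_finite_induct) (auto simp: smult_add_right)

lemma taylor_lin_power:
  fixes a y :: "'a::field"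
  shows "[:1, y:] ^ D = (\<Sum>k\<le>D. smult (of_nat (D choose k) * y ^ k * (a * y + 1) ^ (D - k)) ([:-a, 1:] ^ k))"
proof -
  have e: "[:1, y:] = smult y [:-a, 1:] + [:a * y + 1:]" by simp
  have "[:1, y:] ^ D = (\<Sum>k\<le>D. of_nat (D choose k) * (smult y [:-a, 1:]) ^ k * [:a * y + 1:] ^ (D - k))"
    unfolding e by (rule binomial_ring)
  also have "\<dots> = (\<Sum>k\<le>D. smult (of_nat (D choose k) * y ^ k * (a * y + 1) ^ (D - k)) ([:-a, 1:] ^ k))"
  proof (rule sum.cong[OF refl])
    fix k
    have p: "[:a * y + 1:] ^ j = [:(a * y + 1) ^ j:]" for j
      by (induct j) auto
    show "of_nat (D choose k) * (smult y [:-a, 1:]) ^ k * [:a * y + 1:] ^ (D - k) =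
          smult (of_nat (D choose k) * y ^ k * (a * y + 1) ^ (D - k)) ([:-a, 1:] ^ k)"
      unfolding p smult_power of_nat_poly
      by (simp add: algebra_simps)
  qed
  finally show ?thesis .
qed

definition stepF :: "'a::field set \<Rightarrow> nat \<Rightarrow> 'a poly" where
  "stepF Y d = (\<Sum>y\<in>Y. smult (lagc Y y) ([:1, y:] ^ (d + card Y - 1))) - 1"

lemma stepF_dvd:
  fixes Y :: "'a::field set"
  assumes fin: "finite Y" and ne: "Y \<noteq> {}" and d1: "d \<ge> 1"
    and pw: "\<And>y. y \<in> Y \<Longrightarrow> (a * y + 1) ^ d = 1"
  shows "[:-a, 1:] ^ card Y dvd stepF Y d"
proof -
  let ?m = "card Y"
  define D where "D = d + ?m - 1"
  let ?q = "[:-a, 1::'a:]"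
  have m0: "?m > 0" using fin ne card_gt_0_iff by blast
  define \<gamma> where "\<gamma> k = (\<Sum>y\<in>Y. lagc Y y * (of_nat (D choose k) * y ^ k * (a * y + 1) ^ (D - k)))" for k
  have expand: "stepF Y d = (\<Sum>k\<le>D. smult (\<gamma> k) (?q ^ k)) - 1"
  proof -
    have "(\<Sum>y\<in>Y. smult (lagc Y y) ([:1, y:] ^ D)) =
        (\<Sum>y\<in>Y. \<Sum>k\<le>D. smult (lagc Y y * (of_nat (D choose k) * y ^ k * (a * y + 1) ^ (D - k))) (?q ^ k))"
      by (simp add: taylor_lin_power[of y D a for y] smult_sum_right')
    also have "\<dots> = (\<Sum>k\<le>D. \<Sum>y\<in>Y. smult (lagc Y y * (of_nat (D choose k) * y ^ k * (a * y + 1) ^ (D - k))) (?q ^ k))"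
      by (rule sum.swap)
    also have "\<dots> = (\<Sum>k\<le>D. smult (\<gamma> k) (?q ^ k))"
      by (simp add: \<gamma>_def smult_sum)
    finally show ?thesis unfolding stepF_def D_def by simp
  qed
  have low: "\<gamma> k = (if k = 0 then 1 else 0)" if "k < ?m" for k
  proof -
    have "\<gamma> k = of_nat (D choose k) * (\<Sum>y\<in>Y. lagc Y y * (y ^ k * (a * y + 1) ^ (?m - 1 - k)))"
      unfolding \<gamma>_def sum_distrib_left
    proof (rule sum.cong[OF refl])
      fix y assume "y \<in> Y"
      have "D - k = d + (?m - 1 - k)" using that d1 unfolding D_def by simp
      then have "(a * y + 1) ^ (D - k) = (a * y + 1) ^ (?m - 1 - k)"
        using pw[OF \<open>y \<in> Y\<close>] by (simp add: power_add)
      then show "lagc Y y * (of_nat (D choose k) * y ^ k * (a * y + 1) ^ (D - k)) =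
          of_nat (D choose k) * (lagc Y y * (y ^ k * (a * y + 1) ^ (?m - 1 - k)))"
        by (simp add: algebra_simps)
    qed
    also have "\<dots> = of_nat (D choose k) * (if k = 0 then 1 else 0)"
      by (subst sigma_low[OF fin that]) simp
    finally show ?thesis by simp
  qed
  have mD: "?m \<le> D" using d1 unfolding D_def by simp
  have split: "{..D} = {..<?m} \<union> {?m..D}" using mD by auto
  have "(\<Sum>k\<in>{..<?m}. smult (\<gamma> k) (?q ^ k)) = (\<Sum>k\<in>{..<?m}. if k = 0 then 1 else 0)"
    by (rule sum.cong[OF refl]) (simp add: low)
  also have "\<dots> = 1" using m0 by (simp add: sum.delta)
  finally have s1: "(\<Sum>k\<in>{..<?m}. smult (\<gamma> k) (?q ^ k)) = 1" .
  have "stepF Y d = (\<Sum>k\<in>{?m..D}. smult (\<gamma> k) (?q ^ k))"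
    unfolding expand split by (subst sum.union_disjoint) (auto simp: s1)
  also have "?q ^ ?m dvd \<dots>"
  proof (rule dvd_sum)
    fix k assume "k \<in> {?m..D}"
    then have "?q ^ k = ?q ^ ?m * ?q ^ (k - ?m)" by (simp flip: power_add)
    then show "?q ^ ?m dvd smult (\<gamma> k) (?q ^ k)" by (intro dvd_smult) simp
  qed
  finally show ?thesis .
qed

lemma coprime_lin:
  fixes s t :: "'a::field_gcd"
  assumes "s \<noteq> t"
  shows "coprime [:-s, 1:] [:-t, 1:]"
proof (rule coprimeI)
  fix c :: "'a poly"
  assume c1: "c dvd [:-s, 1:]" and c2: "c dvd [:-t, 1:]"
  have "c dvd [:-s, 1:] - [:-t, 1:]" using c1 c2 by (rule dvd_diff)
  moreover have "[:-s, 1:] - [:-t, 1:] = [:t - s:]" by simp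
  ultimately have cd: "c dvd [:t - s:]" by simp
  have nz: "[:t - s:] \<noteq> 0" using assms by simp
  then have "c \<noteq> 0" using cd by auto
  moreover have "degree c = 0" using dvd_imp_degree_le[OF cd nz] by simp
  ultimately show "is_unit c" by (simp add: is_unit_iff_degree)
qed

lemma prod_lin_power_dvd:
  fixes F :: "'a::field_gcd poly"
  assumes "finite T" "\<And>t. t \<in> T \<Longrightarrow> [:-t, 1:] ^ m dvd F"
  shows "(\<Prod>t\<in>T. [:-t, 1:] ^ m) dvd F"
  using assms
proof (induction T rule: finite_induct)
  case empty
  then show ?case by simp
next
  case (insert x T)
  have "coprime ([:-x, 1:] ^ m) (\<Prod>t\<in>T. [:-t, 1:] ^ m)"
  proof (rule prod_coprime_right)
    fix t assume "t \<in> T"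
    then have "x \<noteq> t" using insert by auto
    then show "coprime ([:-x, 1:] ^ m) ([:-t, 1:] ^ m)"
      using coprime_lin[OF \<open>x \<noteq> t\<close>] by simp
  qed
  then show ?case using insert by (simp add: divides_mult)
qed

lemma stepF_coeff:
  fixes Y :: "'a::field set"
  assumes fin: "finite Y" and k: "0 < k" "k \<le> d + card Y - 1"
  shows "coeff (stepF Y d) k = of_nat ((d + card Y - 1) choose k) * (\<Sum>y\<in>Y. lagc Y y * y ^ k)"
  using k by (simp add: stepF_def coeff_sum coeff_linear_poly_power sum_distrib_right mult_ac)

lemma stepF_degree:
  fixes Y :: "'a::field set"
  shows "degree (stepF Y d) \<le> d + card Y - 1"
  unfolding stepF_def
proof (rule degree_diff_le)
  show "degree (1::'a poly) \<le> d + card Y - 1" by simp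
  show "degree (\<Sum>y\<in>Y. smult (lagc Y y) ([:1, y:] ^ (d + card Y - 1))) \<le> d + card Y - 1"
  proof (cases "finite Y")
    case True
    show ?thesis
    proof (rule degree_sum_le[OF True])
      fix y
      have "degree (smult (lagc Y y) ([:1, y:] ^ (d + card Y - 1))) \<le> degree ([:1, y:] ^ (d + card Y - 1))"
        by (rule degree_smult_le)
      also have "\<dots> \<le> degree [:1, y:] * (d + card Y - 1)" by (rule degree_power_le)
      also have "\<dots> \<le> d + card Y - 1" by simp
      finally show "degree (smult (lagc Y y) ([:1, y:] ^ (d + card Y - 1))) \<le> d + card Y - 1" .
    qed
  qed simp
qed

lemma core:
  fixes X Y :: "'a::field_gcd set" and d :: nat
  assumes finX: "finite X" and finY: "finite Y" and X0: "0 \<notin> X" and Y0: "0 \<notin> Y"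
    and neY: "Y \<noteq> {}" and d2: "d \<ge> 2"
    and pw: "\<And>x y. x \<in> X \<Longrightarrow> y \<in> Y \<Longrightarrow> (x * y + 1) ^ d = 1"
    and binom: "\<And>k. k \<le> d + card Y - 1 \<Longrightarrow> of_nat ((d + card Y - 1) choose k) \<noteq> (0::'a)"
  shows "card X * card Y \<le> d - 1 \<and>
    (card X * card Y = d - 1 \<longrightarrow>
      of_nat (d - 1) * (\<Sum>y\<in>Y. y) = - of_nat (card Y * (card Y + 1)) * (\<Sum>x\<in>X. inverse x))"
proof -
  define m where "m = card Y"
  define D where "D = d + m - 1"
  define F where "F = stepF Y d"
  define \<sigma> where "\<sigma> k = (\<Sum>y\<in>Y. lagc Y y * y ^ k)" for k
  have "card Y > 0" using finY neY card_gt_0_iff by blast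
  then have m1: "m \<ge> 1" unfolding m_def by simp
  have mD: "Suc m \<le> D" using d2 unfolding D_def by simp
  have sm: "\<sigma> m = - (\<Prod>y\<in>Y. - y)"
    unfolding \<sigma>_def m_def using sigma_m[OF finY neY] by (simp add: poly_prod)
  have sm_nz: "\<sigma> m \<noteq> 0" unfolding sm using Y0 finY by (auto simp: prod_zero_iff)
  have sm1: "\<sigma> (Suc m) = (\<Sum>y\<in>Y. y) * \<sigma> m"
    unfolding \<sigma>_def m_def by (rule sigma_m1[OF finY neY])
  have cFm: "coeff F m = of_nat (D choose m) * \<sigma> m"
    unfolding F_def D_def m_def \<sigma>_def using stepF_coeff[OF finY] m1 mD unfolding D_def m_def by simp
  have cFm1: "coeff F (Suc m) = of_nat (D choose Suc m) * \<sigma> (Suc m)"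
    unfolding F_def D_def m_def \<sigma>_def using stepF_coeff[OF finY, of "Suc m" d] mD unfolding D_def m_def by simp
  have bm: "of_nat (D choose m) \<noteq> (0::'a)" using binom[of m] mD unfolding D_def m_def by simp
  have F0: "F \<noteq> 0" using cFm bm sm_nz by auto
  have degF: "degree F \<le> D" unfolding F_def D_def m_def by (rule stepF_degree)
  define T where "T = insert 0 X"
  have finT: "finite T" using finX unfolding T_def by simp
  have "(\<Prod>t\<in>T. [:-t, 1:] ^ m) dvd F"
  proof (rule prod_lin_power_dvd[OF finT])
    fix t assume "t \<in> T"
    have "(t * y + 1) ^ d = 1" if "y \<in> Y" for y
      using \<open>t \<in> T\<close> pw that unfolding T_def by auto
    then show "[:-t, 1:] ^ m dvd F"
      unfolding F_def m_def using stepF_dvd[OF finY neY] d2 by simp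
  qed
  then obtain h where Fq: "F = (\<Prod>t\<in>T. [:-t, 1:] ^ m) * h" by (elim dvdE)
  let ?q = "\<Prod>t\<in>T. [:-t, 1::'a:] ^ m"
  have dq: "degree ?q = (card X + 1) * m"
  proof -
    have "degree ?q = (\<Sum>t\<in>T. degree ([:-t, 1::'a:] ^ m))"
      by (rule degree_prod_eq_sum_degree) auto
    also have "\<dots> = (\<Sum>t\<in>T. m)" by (simp add: degree_linear_power)
    also have "\<dots> = card T * m" by simp
    also have "card T = card X + 1" unfolding T_def using finX X0 by simp
    finally show ?thesis .
  qed
  have h0: "h \<noteq> 0" using F0 Fq by auto
  have q0: "?q \<noteq> 0" using finT by (simp add: prod_zero_iff)
  have degsum: "degree F = degree ?q + degree h" unfolding Fq using q0 h0 by (rule degree_mult_eq)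
  have part1: "card X * m \<le> d - 1" using degsum dq degF unfolding D_def
    by (simp add: algebra_simps)
  moreover have "card X * m = d - 1 \<longrightarrow>
      of_nat (d - 1) * (\<Sum>y\<in>Y. y) = - of_nat (m * (m + 1)) * (\<Sum>x\<in>X. inverse x)"
  proof
    assume eq: "card X * m = d - 1"
    have "degree h = 0" using degsum dq degF eq unfolding D_def by (simp add: algebra_simps)
    then obtain \<kappa> where h: "h = [:\<kappa>:]" by (meson degree_eq_zeroE)
    define R where "R = (\<Prod>x\<in>X. [:-x, 1::'a:])"
    have qR: "?q = monom 1 m * R ^ m"
      unfolding T_def R_def using finX X0 by (simp add: prod_power_distrib monom_altdef)
    have FR: "F = smult \<kappa> (monom 1 m * R ^ m)" unfolding Fq h qR by simp
    define r0 where "r0 = coeff R 0"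
    define P where "P = (\<Sum>x\<in>X. inverse x)"
    have r1: "coeff R 1 = - r0 * P" unfolding R_def r0_def P_def by (rule linprod_low[OF finX X0])
    obtain m' where m': "m = Suc m'" using m1 by (cases m) auto
    have c1: "coeff F m = \<kappa> * r0 ^ m"
      unfolding FR by (simp add: coeff_monom_mult coeff_0_power r0_def)
    have c2: "coeff F (Suc m) = \<kappa> * (of_nat m * r0 ^ m' * coeff R 1)"
    proof -
      have "coeff F (Suc m) = \<kappa> * coeff (R ^ m) 1" unfolding FR by (simp add: coeff_monom_mult)
      also have "coeff (R ^ m) 1 = of_nat m * r0 ^ m' * coeff R 1"
        unfolding m' r0_def by (rule coeff_power_1)
      finally show ?thesis .
    qed
    have c2': "coeff F (Suc m) = - of_nat m * P * coeff F m"
    proof -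
      have "coeff F (Suc m) = \<kappa> * (of_nat m * r0 ^ m' * (- r0 * P))" using c2 r1 by simp
      also have "\<dots> = - of_nat m * P * (\<kappa> * r0 ^ m)" using m' by (simp add: algebra_simps)
      finally show ?thesis using c1 by simp
    qed
    have nat_id: "Suc m * (D choose Suc m) = (d - 1) * (D choose m)"
    proof -
      have "Suc m * (D choose Suc m) = D * ((D - 1) choose m)" by (rule binomial_absorption)
      also have "\<dots> = (D - m) * (D choose m)" by (rule binomial_absorb_comp[symmetric])
      also have "D - m = d - 1" unfolding D_def using m1 by simp
      finally show ?thesis .
    qed
    have "of_nat (Suc m) * coeff F (Suc m) = of_nat (Suc m) * of_nat (D choose Suc m) * ((\<Sum>y\<in>Y. y) * \<sigma> m)"
      unfolding cFm1 sm1 by simp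
    also have "\<dots> = of_nat (Suc m * (D choose Suc m)) * ((\<Sum>y\<in>Y. y) * \<sigma> m)"
      by (simp only: of_nat_mult)
    also have "\<dots> = of_nat (d - 1) * (\<Sum>y\<in>Y. y) * (of_nat (D choose m) * \<sigma> m)"
      unfolding nat_id of_nat_mult by (simp only: mult_ac)
    finally have A: "of_nat (Suc m) * coeff F (Suc m) = of_nat (d - 1) * (\<Sum>y\<in>Y. y) * coeff F m"
      unfolding cFm .
    have B: "of_nat (Suc m) * coeff F (Suc m) = - of_nat (m * (m + 1)) * P * coeff F m"
      unfolding c2' by (simp add: algebra_simps)
    have cFm_nz: "coeff F m \<noteq> 0" using cFm bm sm_nz by simp
    from A B have "of_nat (d - 1) * (\<Sum>y\<in>Y. y) * coeff F m = - of_nat (m * (m + 1)) * P * coeff F m"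
      by simp
    then show "of_nat (d - 1) * (\<Sum>y\<in>Y. y) = - of_nat (m * (m + 1)) * (\<Sum>x\<in>X. inverse x)"
      using cFm_nz unfolding P_def by simp
  qed
  ultimately show ?thesis unfolding m_def by simp
qed

lemma mod_ring_of_nat_nz:
  assumes "0 < k" "k < CARD('p)"
  shows "(of_nat k :: 'p::prime_card mod_ring) \<noteq> 0"
proof
  assume "(of_nat k :: 'p mod_ring) = 0"
  then have "CARD('p) dvd k" by (rule of_nat_0_mod_ring_dvd)
  then show False using assms by (auto dest: dvd_imp_le)
qed

lemma mod_ring_of_nat_inj:
  assumes "x < CARD('p)" "y < CARD('p)" "(of_nat x :: 'p::prime_card mod_ring) = of_nat y"
  shows "x = y"
proof (rule ccontr)
  assume ne: "x \<noteq> y"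
  show False
  proof (cases "x < y")
    case True
    have "(of_nat (y - x) :: 'p mod_ring) = of_nat y - of_nat x" using True by (simp add: of_nat_diff)
    also have "\<dots> = 0" using assms(3) by simp
    moreover have "y - x < CARD('p)" using assms(2) by linarith
    ultimately show False using mod_ring_of_nat_nz[of "y - x", where 'p='p] True by simp
  next
    case False
    then have "y < x" using ne by simp
    have "(of_nat (x - y) :: 'p mod_ring) = of_nat x - of_nat y" using \<open>y < x\<close> by (simp add: of_nat_diff)
    also have "\<dots> = 0" using assms(3) by simp
    moreover have "x - y < CARD('p)" using assms(1) by linarith
    ultimately show False using mod_ring_of_nat_nz[of "x - y", where 'p='p] \<open>y < x\<close> by simp
  qed
qed

lemma mod_ring_binom_nz:
  assumes "D < CARD('p)" "k \<le> D"
  shows "(of_nat (D choose k) :: 'p::prime_card mod_ring) \<noteq> 0"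
proof
  assume "(of_nat (D choose k) :: 'p mod_ring) = 0"
  then have dv: "CARD('p) dvd (D choose k)" by (rule of_nat_0_mod_ring_dvd)
  have "fact k * fact (D - k) * (D choose k) = (fact D :: nat)" using assms(2) by (rule binomial_fact_lemma)
  then have "CARD('p) dvd fact D" using dv by (metis dvd_mult)
  then have "CARD('p) \<le> D" using prime_dvd_fact_iff[OF prime_card] by blast
  then show False using assms by simp
qed

lemma mult_subgroupD:
  assumes "mult_subgroup G"
  shows "0 \<notin> G" "1 \<in> G" "\<And>x y. x \<in> G \<Longrightarrow> y \<in> G \<Longrightarrow> x * y \<in> G"
    "\<And>x. x \<in> G \<Longrightarrow> inverse x \<in> G"
  using assms unfolding mult_subgroup_def by blast+

lemma subgroup_mult_image:
  fixes G :: "'a::field set"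
  assumes "mult_subgroup G" "g \<in> G"
  shows "(\<lambda>h. g * h) ` G = G" and "inj_on (\<lambda>h. g * h) G"
proof -
  note D = mult_subgroupD[OF assms(1)]
  have g0: "g \<noteq> 0" using D(1) assms(2) by auto
  show "inj_on (\<lambda>h. g * h) G" using g0 by (auto intro: inj_onI)
  show "(\<lambda>h. g * h) ` G = G"
  proof
    show "(\<lambda>h. g * h) ` G \<subseteq> G" using D(3) assms(2) by auto
    show "G \<subseteq> (\<lambda>h. g * h) ` G"
    proof
      fix x assume "x \<in> G"
      have "inverse g * x \<in> G" using D(3,4) assms(2) \<open>x \<in> G\<close> by blast
      moreover have "x = g * (inverse g * x)" using g0 by (simp add: field_simps)
      ultimately show "x \<in> (\<lambda>h. g * h) ` G" by blast
    qed
  qed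
qed

lemma subgroup_pow_card:
  fixes G :: "'a::field set"
  assumes sg: "mult_subgroup G" and fin: "finite G" and g: "g \<in> G"
  shows "g ^ card G = 1"
proof -
  have "(\<Prod>h\<in>G. h) = (\<Prod>h\<in>(\<lambda>h. g * h) ` G. h)" using subgroup_mult_image(1)[OF sg g] by simp
  also have "\<dots> = (\<Prod>h\<in>G. g * h)" using subgroup_mult_image(2)[OF sg g] by (simp add: prod.reindex)
  also have "\<dots> = g ^ card G * (\<Prod>h\<in>G. h)" by (simp add: prod.distrib)
  finally have e: "(\<Prod>h\<in>G. h) = g ^ card G * (\<Prod>h\<in>G. h)" .
  have "(\<Prod>h\<in>G. h) \<noteq> 0" using mult_subgroupD(1)[OF sg] fin by (auto simp: prod_zero_iff)
  with e show ?thesis by simp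
qed

lemma subgroup_sum_zero:
  fixes G :: "'a::field set"
  assumes sg: "mult_subgroup G" and h: "h \<in> G" "h \<noteq> 1"
  shows "(\<Sum>g\<in>G. g) = 0"
proof -
  have "(\<Sum>g\<in>G. g) = (\<Sum>g\<in>(\<lambda>x. h * x) ` G. g)" using subgroup_mult_image(1)[OF sg h(1)] by simp
  also have "\<dots> = (\<Sum>g\<in>G. h * g)" using subgroup_mult_image(2)[OF sg h(1)] by (simp add: sum.reindex)
  also have "\<dots> = h * (\<Sum>g\<in>G. g)" by (simp add: sum_distrib_left)
  finally have "(h - 1) * (\<Sum>g\<in>G. g) = 0" by (simp add: algebra_simps)
  then show ?thesis using h by simp
qed

lemma subgroup_inv_sum:
  fixes G :: "'a::field set"
  assumes sg: "mult_subgroup G" and fin: "finite G"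
  shows "2 * (\<Sum>g\<in>G-{1}. inverse (g - 1)) = - of_nat (card G - 1)"
proof -
  have G0: "0 \<notin> G" and inv: "\<And>x. x \<in> G \<Longrightarrow> inverse x \<in> G" and one: "1 \<in> G"
    using mult_subgroupD[OF sg] by auto
  have img: "inverse ` (G - {1}) = G - {1}"
  proof
    show "inverse ` (G - {1}) \<subseteq> G - {1}" using inv by auto
    show "G - {1} \<subseteq> inverse ` (G - {1})"
    proof
      fix x assume "x \<in> G - {1}"
      then have "inverse x \<in> G - {1}" using inv by auto
      moreover have "x = inverse (inverse x)" by simp
      ultimately show "x \<in> inverse ` (G - {1})" by blast
    qed
  qed
  have injI: "inj_on inverse (G - {1})" by (auto intro: inj_onI)
  have "(\<Sum>g\<in>G-{1}. inverse (g - 1)) = (\<Sum>g\<in>inverse ` (G-{1}). inverse (g - 1))" using img by simp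
  also have "\<dots> = (\<Sum>g\<in>G-{1}. inverse (inverse g - 1))" using injI by (rule sum.reindex[unfolded comp_def])
  finally have e: "(\<Sum>g\<in>G-{1}. inverse (g - 1)) = (\<Sum>g\<in>G-{1}. inverse (inverse g - 1))" .
  have "2 * (\<Sum>g\<in>G-{1}. inverse (g - 1)) = (\<Sum>g\<in>G-{1}. inverse (g - 1)) + (\<Sum>g\<in>G-{1}. inverse (inverse g - 1))"
    by (simp only: mult_2 e)
  also have "\<dots> = (\<Sum>g\<in>G-{1}. inverse (g - 1) + inverse (inverse g - 1))"
    by (rule sum.distrib[symmetric])
  also have "\<dots> = (\<Sum>g\<in>G-{1}. -1)"
  proof (rule sum.cong[OF refl])
    fix g assume "g \<in> G - {1}"
    then have g0: "g \<noteq> 0" and g1: "g \<noteq> 1" using G0 by auto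
    then have "g - 1 \<noteq> 0" by simp
    have a: "inverse g - 1 = (1 - g) / g" using g0 by (simp add: field_simps)
    have b: "inverse ((1 - g) / g) = - (g / (g - 1))"
      by (metis minus_diff_eq divide_minus_right inverse_divide)
    have c: "inverse (g - 1) - g / (g - 1) = (1 - g) / (g - 1)"
      by (simp add: diff_divide_distrib inverse_eq_divide)
    have d: "(1 - g) / (g - 1) = -1" using \<open>g - 1 \<noteq> 0\<close>
      by (metis minus_diff_eq divide_minus_left divide_self)
    show "inverse (g - 1) + inverse (inverse g - 1) = -1"
      unfolding a b using c d by simp
  qed
  also have "\<dots> = - of_nat (card G - 1)" using fin one by simp
  finally show ?thesis .
qed

lemma final_algebra:
  fixes eA eB PA PB :: "'a::field"
  assumes R1: "of_nat (d - 1) * eB = - of_nat (m * (m + 1)) * PA"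
    and R2: "of_nat (d - 1) * eA = - of_nat (n * (n + 1)) * PB"
    and E1: "eA * eB = - of_nat d"
    and E2: "2 * (PA * PB) = - of_nat (d - 1)"
    and N: "n * m = d - 1"
    and nz: "(of_nat (d - 1) :: 'a) \<noteq> 0"
  shows "(of_nat (2 * d) :: 'a) = of_nat ((n + 1) * (m + 1))"
proof -
  define \<delta> where "\<delta> = (of_nat (d - 1) :: 'a)"
  have "(\<delta> * eA) * (\<delta> * eB) = (- of_nat (n * (n + 1)) * PB) * (- of_nat (m * (m + 1)) * PA)"
    unfolding \<delta>_def R1 R2 by (rule refl)
  then have "(\<delta> * eA) * (\<delta> * eB) = (of_nat (n * (n + 1)) * PB) * (of_nat (m * (m + 1)) * PA)"
    by (simp only: mult_minus_left mult_minus_right minus_minus)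
  then have "\<delta> * \<delta> * (eA * eB) = of_nat (n * (n + 1) * (m * (m + 1))) * (PA * PB)"
    by (simp add: algebra_simps)
  then have "2 * (\<delta> * \<delta> * (eA * eB)) = of_nat (n * (n + 1) * (m * (m + 1))) * (2 * (PA * PB))"
    by (simp add: algebra_simps)
  also have "n * (n + 1) * (m * (m + 1)) = (n * m) * ((n + 1) * (m + 1))" by (simp add: algebra_simps)
  finally have "2 * (\<delta> * \<delta> * (- of_nat d)) = of_nat ((d - 1) * ((n + 1) * (m + 1))) * (- \<delta>)"
    unfolding E1 E2 N \<delta>_def .
  moreover have "of_nat ((d - 1) * ((n + 1) * (m + 1))) = \<delta> * of_nat ((n + 1) * (m + 1))"
    unfolding \<delta>_def by (simp only: of_nat_mult)
  ultimately have H: "2 * (\<delta> * \<delta> * (- of_nat d)) = (\<delta> * of_nat ((n + 1) * (m + 1))) * (- \<delta>)" by simp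
  have gen: "x * x * (2 * a) = x * x * b" if h: "2 * (x * x * (- a)) = (x * b) * (- x)" for x a b :: 'a
  proof -
    have "x * x * (2 * a) = - (2 * (x * x * (- a)))" by (simp add: algebra_simps)
    also have "\<dots> = - ((x * b) * (- x))" using h by simp
    also have "\<dots> = x * x * b" by (simp add: algebra_simps)
    finally show ?thesis .
  qed
  have "\<delta> * \<delta> * (2 * of_nat d) = \<delta> * \<delta> * of_nat ((n + 1) * (m + 1))"
    by (rule gen[OF H])
  then have "\<delta> * \<delta> * of_nat (2 * d) = \<delta> * \<delta> * of_nat ((n + 1) * (m + 1))"
    by (simp only: of_nat_mult of_nat_numeral)
  then show ?thesis using nz unfolding \<delta>_def by simp
qed

lemma fin_mr: "finite (X :: 'p::prime_card mod_ring set)"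
  by (rule finite_subset[OF subset_UNIV]) simp

theorem theorem1p10:
  fixes G :: "'p::prime_card mod_ring set" and lam :: "'p mod_ring"
  assumes "odd CARD('p)"
    and "mult_subgroup G" and "G \<noteq> UNIV - {0}"
    and "lam \<in> G"
  shows "\<not> (\<exists>A B. A \<subseteq> UNIV - {0} \<and> B \<subseteq> UNIV - {0} \<and> card A \<ge> 2 \<and> card B \<ge> 2 \<and>
            prodset A B = (\<lambda>g. g - lam) ` G - {0})"
proof
  assume "\<exists>A B. A \<subseteq> UNIV - {0} \<and> B \<subseteq> UNIV - {0} \<and> card A \<ge> 2 \<and> card B \<ge> 2 \<and>
            prodset A B = (\<lambda>g. g - lam) ` G - {0}"
  then obtain A B where A0: "A \<subseteq> UNIV - {0}" and B0: "B \<subseteq> UNIV - {0}" and cA: "card A \<ge> 2"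
    and cB: "card B \<ge> 2" and AB: "prodset A B = (\<lambda>g. g - lam) ` G - {0}" by blast
  note sg = assms(2)
  note D = mult_subgroupD[OF sg]
  define d where "d = card G"
  define p where "p = CARD('p)"
  have finG: "finite G" and finA: "finite A" and finB: "finite B" by (rule fin_mr)+
  have lam0: "lam \<noteq> 0" using D(1) assms(4) by auto
  have ilam: "inverse lam \<in> G" using D(4) assms(4) by blast
  define A1 where "A1 = (\<lambda>a. a * inverse lam) ` A"
  define S1 where "S1 = (\<lambda>g. g - 1) ` (G - {1})"
  have finA1: "finite A1" and finS1: "finite S1" by (rule fin_mr)+
  have injA1: "inj_on (\<lambda>a. a * inverse lam) A" using lam0 by (auto intro: inj_onI)
  have cA1: "card A1 = card A" unfolding A1_def using injA1 by (rule card_image)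
  have A10: "0 \<notin> A1" using A0 lam0 unfolding A1_def by auto
  have B00: "0 \<notin> B" using B0 by auto
  have mem_AB: "a * b \<in> (\<lambda>g. g - lam) ` G - {0}" if "a \<in> A" "b \<in> B" for a b
    using that AB unfolding prodset_def by blast
  have img: "(\<lambda>(x, y). x * y) ` (A1 \<times> B) = S1"
  proof
    show "(\<lambda>(x, y). x * y) ` (A1 \<times> B) \<subseteq> S1"
    proof
      fix z assume "z \<in> (\<lambda>(x, y). x * y) ` (A1 \<times> B)"
      then obtain a b where a: "a \<in> A" and b: "b \<in> B" and z: "z = a * inverse lam * b"
        unfolding A1_def by auto
      have m1: "a * b \<in> (\<lambda>g. g - lam) ` G" and ab0: "a * b \<noteq> 0" using mem_AB[OF a b] by auto
      from m1 obtain g where g: "g \<in> G" "a * b = g - lam" by blast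
      have "z = g * inverse lam - 1" using z g(2) lam0 by (simp add: field_simps)
      moreover have "g * inverse lam \<in> G" using D(3) g(1) ilam by blast
      moreover have "g * inverse lam \<noteq> 1"
      proof
        assume "g * inverse lam = 1"
        then have "g = lam" using lam0 by (simp add: field_simps)
        then show False using g ab0 by simp
      qed
      ultimately show "z \<in> S1" unfolding S1_def by blast
    qed
    show "S1 \<subseteq> (\<lambda>(x, y). x * y) ` (A1 \<times> B)"
    proof
      fix s assume "s \<in> S1"
      then obtain h where h: "h \<in> G" "h \<noteq> 1" "s = h - 1" unfolding S1_def by auto
      have "lam * h \<in> G" using D(3) h(1) assms(4) by blast
      moreover have "lam * h - lam \<noteq> 0" using h(2) lam0 by (simp add: right_diff_distrib[symmetric])
      ultimately have "lam * h - lam \<in> prodset A B" unfolding AB by blast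
      then obtain a b where a: "a \<in> A" and b: "b \<in> B" and ab: "lam * h - lam = a * b"
        unfolding prodset_def by blast
      have "a * b = lam * s" unfolding h(3) ab[symmetric] by (simp add: algebra_simps)
      then have "s = (a * inverse lam) * b" using lam0 by (simp add: field_simps)
      moreover have "a * inverse lam \<in> A1" unfolding A1_def using a by blast
      ultimately show "s \<in> (\<lambda>(x, y). x * y) ` (A1 \<times> B)" using b by force
    qed
  qed
  have pw: "(x * y + 1) ^ d = 1" if "x \<in> A1" "y \<in> B" for x y
  proof -
    have "x * y \<in> S1" using img that by force
    then obtain g where "g \<in> G" "x * y = g - 1" unfolding S1_def by auto
    then have "x * y + 1 \<in> G" by simp
    then show ?thesis unfolding d_def by (rule subgroup_pow_card[OF sg finG])
  qed
  have injS1: "inj_on (\<lambda>g. g - 1) (G - {1})" by (auto intro: inj_onI)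
  have cS1: "card S1 = d - 1" unfolding S1_def d_def using card_image[OF injS1] finG D(2)
    by simp
  have "A1 \<noteq> {}" using cA cA1 by auto
  moreover have "B \<noteq> {}" using cB by auto
  ultimately have "S1 \<noteq> {}" using img by auto
  then obtain h where h: "h \<in> G" "h \<noteq> 1" unfolding S1_def by auto
  have d2: "d \<ge> 2"
  proof -
    have "{1, h} \<subseteq> G" using h D(2) by auto
    then have "card {1, h} \<le> d" unfolding d_def using finG by (rule card_mono[rotated])
    then show ?thesis using h by simp
  qed
  have dp: "2 * d + 1 \<le> p"
  proof -
    obtain c where c: "c \<noteq> 0" "c \<notin> G" using assms(3) D(1) by blast
    have disj: "(\<lambda>g. c * g) ` G \<inter> G = {}"
    proof (rule ccontr)
      assume "(\<lambda>g. c * g) ` G \<inter> G \<noteq> {}"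
      then obtain g where g: "g \<in> G" "c * g \<in> G" by auto
      have "c = (c * g) * inverse g" using g D(1) by (auto simp: field_simps)
      moreover have "(c * g) * inverse g \<in> G" using D(3,4) g by blast
      ultimately show False using c(2) by metis
    qed
    have injc: "inj_on (\<lambda>g. c * g) G" using c by (auto intro: inj_onI)
    have sub: "(\<lambda>g. c * g) ` G \<union> G \<subseteq> UNIV - {0}" using D(1) c by auto
    have "card ((\<lambda>g. c * g) ` G \<union> G) = d + d"
      using card_Un_disjoint[OF fin_mr fin_mr disj] card_image[OF injc] unfolding d_def by simp
    moreover have "card ((\<lambda>g. c * g) ` G \<union> G) \<le> card (UNIV - {0::'p mod_ring})"
      using sub by (rule card_mono[OF fin_mr])
    moreover have "card (UNIV - {0::'p mod_ring}) = p - 1" unfolding p_def by simp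
    moreover have "p \<ge> 2" unfolding p_def using prime_card[where 'a='p] prime_ge_2_nat by blast
    ultimately show ?thesis by linarith
  qed
  have mle: "card B \<le> d - 1"
  proof -
    obtain a where a: "a \<in> A1" using \<open>A1 \<noteq> {}\<close> by auto
    have "a \<noteq> 0" using a A10 by auto
    then have inj: "inj_on (\<lambda>b. a * b) B" by (auto intro: inj_onI)
    have "(\<lambda>b. a * b) ` B \<subseteq> S1" using img a by force
    then have "card ((\<lambda>b. a * b) ` B) \<le> card S1" by (rule card_mono[OF finS1])
    then show ?thesis using card_image[OF inj] cS1 by simp
  qed
  have nle: "card A1 \<le> d - 1"
  proof -
    obtain b where b: "b \<in> B" using \<open>B \<noteq> {}\<close> by auto
    have "b \<noteq> 0" using b B00 by auto
    then have inj: "inj_on (\<lambda>a. a * b) A1" by (auto intro: inj_onI)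
    have "(\<lambda>a. a * b) ` A1 \<subseteq> S1" using img b by force
    then have "card ((\<lambda>a. a * b) ` A1) \<le> card S1" by (rule card_mono[OF finS1])
    then show ?thesis using card_image[OF inj] cS1 by simp
  qed
  have binB: "(of_nat ((d + card B - 1) choose k) :: 'p mod_ring) \<noteq> 0" if "k \<le> d + card B - 1" for k
    by (rule mod_ring_binom_nz) (use that mle dp d2 in \<open>simp_all add: p_def\<close>)
  have binA: "(of_nat ((d + card A1 - 1) choose k) :: 'p mod_ring) \<noteq> 0" if "k \<le> d + card A1 - 1" for k
    by (rule mod_ring_binom_nz) (use that nle dp d2 in \<open>simp_all add: p_def\<close>)
  have pw': "(x * y + 1) ^ d = 1" if "x \<in> B" "y \<in> A1" for x y
    using pw[OF that(2,1)] by (simp add: mult.commute)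
  have C1: "card A1 * card B \<le> d - 1 \<and>
    (card A1 * card B = d - 1 \<longrightarrow>
      of_nat (d - 1) * (\<Sum>y\<in>B. y) = - of_nat (card B * (card B + 1)) * (\<Sum>x\<in>A1. inverse x))"
    by (rule core[OF finA1 finB A10 B00 \<open>B \<noteq> {}\<close> d2 pw binB])
  have C2: "card B * card A1 \<le> d - 1 \<and>
    (card B * card A1 = d - 1 \<longrightarrow>
      of_nat (d - 1) * (\<Sum>y\<in>A1. y) = - of_nat (card A1 * (card A1 + 1)) * (\<Sum>x\<in>B. inverse x))"
    by (rule core[OF finB finA1 B00 A10 \<open>A1 \<noteq> {}\<close> d2 pw' binA])
  have "d - 1 \<le> card A1 * card B"
  proof -
    have "card S1 \<le> card (A1 \<times> B)" unfolding img[symmetric] by (rule card_image_le) (simp add: finA1 finB)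
    then show ?thesis using cS1 by (simp add: card_cartesian_product)
  qed
  then have N: "card A1 * card B = d - 1" using C1 by simp
  have R1: "of_nat (d - 1) * (\<Sum>y\<in>B. y) = - of_nat (card B * (card B + 1)) * (\<Sum>x\<in>A1. inverse x)"
    using C1 N by simp
  have R2: "of_nat (d - 1) * (\<Sum>y\<in>A1. y) = - of_nat (card A1 * (card A1 + 1)) * (\<Sum>x\<in>B. inverse x)"
    using C2 N by (simp add: mult.commute)
  have injM: "inj_on (\<lambda>(x, y). x * y) (A1 \<times> B)"
    using N cS1 img by (simp add: inj_on_iff_eq_card finA1 finB card_cartesian_product)
  have sumS: "(\<Sum>s\<in>S1. f s) = (\<Sum>x\<in>A1. \<Sum>y\<in>B. f (x * y))" for f :: "'p mod_ring \<Rightarrow> 'p mod_ring"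
  proof -
    have "(\<Sum>s\<in>S1. f s) = (\<Sum>z\<in>A1 \<times> B. f ((\<lambda>(x, y). x * y) z))"
      unfolding img[symmetric] using injM by (simp add: sum.reindex)
    also have "\<dots> = (\<Sum>x\<in>A1. \<Sum>y\<in>B. f (x * y))"
      by (simp add: sum.cartesian_product split_def)
    finally show ?thesis .
  qed
  have sumG: "(\<Sum>g\<in>G. g) = 0" by (rule subgroup_sum_zero[OF sg h])
  have E1: "(\<Sum>x\<in>A1. x) * (\<Sum>y\<in>B. y) = - of_nat d"
  proof -
    have "(\<Sum>x\<in>A1. x) * (\<Sum>y\<in>B. y) = (\<Sum>x\<in>A1. \<Sum>y\<in>B. x * y)" by (rule sum_product)
    also have "\<dots> = (\<Sum>s\<in>S1. s)" using sumS[of "\<lambda>s. s"] by simp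
    also have "\<dots> = (\<Sum>g\<in>G - {1}. g - 1)" unfolding S1_def using injS1 by (simp add: sum.reindex)
    also have "\<dots> = (\<Sum>g\<in>G - {1}. g) - of_nat (d - 1)"
      using finG D(2) unfolding d_def by (simp add: sum_subtractf)
    also have "(\<Sum>g\<in>G - {1}. g) = (\<Sum>g\<in>G. g) - 1" using finG D(2) by (simp add: sum_diff1)
    finally show ?thesis using sumG d2 by (simp add: of_nat_diff)
  qed
  have E2: "2 * ((\<Sum>x\<in>A1. inverse x) * (\<Sum>y\<in>B. inverse y)) = - of_nat (d - 1)"
  proof -
    have "(\<Sum>x\<in>A1. inverse x) * (\<Sum>y\<in>B. inverse y) = (\<Sum>x\<in>A1. \<Sum>y\<in>B. inverse x * inverse y)"
      by (rule sum_product)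
    also have "\<dots> = (\<Sum>s\<in>S1. inverse s)" using sumS[of inverse] by (simp add: inverse_mult_distrib)
    also have "\<dots> = (\<Sum>g\<in>G - {1}. inverse (g - 1))" unfolding S1_def using injS1 by (simp add: sum.reindex)
    finally show ?thesis using subgroup_inv_sum[OF sg finG] unfolding d_def by simp
  qed
  have nz: "(of_nat (d - 1) :: 'p mod_ring) \<noteq> 0"
    by (rule mod_ring_of_nat_nz) (use d2 dp in \<open>simp_all add: p_def\<close>)
  have EQ: "(of_nat (2 * d) :: 'p mod_ring) = of_nat ((card A1 + 1) * (card B + 1))"
    by (rule final_algebra[OF R1 R2 E1 E2 N nz])
  define n where "n = card A1"
  define m where "m = card B"
  have n2: "n \<ge> 2" using cA cA1 unfolding n_def by simp
  have m2: "m \<ge> 2" using cB unfolding m_def by simp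
  have Nnm: "n * m = d - 1" using N unfolding n_def m_def .
  have big: "n + m \<le> n * m"
  proof -
    have "n * 2 \<le> n * m" using m2 by simp
    moreover have "2 * m \<le> n * m" using n2 by simp
    ultimately show ?thesis by linarith
  qed
  have ex: "(n + 1) * (m + 1) = n * m + n + m + 1" by (simp add: algebra_simps)
  have "2 * d = (n + 1) * (m + 1)"
  proof (rule mod_ring_of_nat_inj)
    show "2 * d < CARD('p)" using dp unfolding p_def by simp
    show "(n + 1) * (m + 1) < CARD('p)" using ex big Nnm dp d2 unfolding p_def by linarith
    show "(of_nat (2 * d) :: 'p mod_ring) = of_nat ((n + 1) * (m + 1))" using EQ unfolding n_def m_def .
  qed
  then show False using ex big Nnm d2 by linarith
qed

end
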